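(* Let $d\ge 2$ and $n\ge1$ be integers, let $\mathcal{S}^*\subseteq\{1,\dots,d\}$, let $a_{1:n}\in(\{0,1\}^d)^n$ be arbitrary, and let $x_t:=h_{\mathcal{S}^*}(a_t)$ for $t=1,\dots,n$. Then the cumulative log-loss of the predictor $\zeta_d$ satisfies $\mathcal{L}_n(\zeta_d)=-\log_2\prod_{t=1}^n\zeta_d(x_t\mid x_{<t};a_{1:t})\le 2d^2$.
   Context: For $\mathcal{S}\subseteq\{1,\dots,d\}$ and $a\in\{0,1\}^d$, $h_{\mathcal{S}}(a)=\bigwedge_{i\in\mathcal{S}}a^i$ (equal to $1$ if $\mathcal{S}=\emptyset$), where $a^i$ is the $i$-th component of $a$. The predictor $\zeta_d$ is defined as follows, with $\alpha:=2^{-d/2^d}$. At time $t$, let $\mathcal{A}_t:=\{a_\tau:\tau<t,\ x_\tau=0\}$ (the set of previously seen negative inputs) and, for $i=1,\dots,d$, let $w_i:=\prod_{\tau<t:\,x_\tau=1}a_\tau^i$ (equal to $1$ if there is no such $\tau$). If $a_t\in\mathcal{A}_t$, then $\zeta_d(0\mid x_{<t};a_{1:t})=1$ and $\zeta_d(1\mid x_{<t};a_{1:t})=0$. Otherwise $$\zeta_d(1\mid x_{<t};a_{1:t})=\prod_{i=1}^d\frac{(1-\alpha)+\alpha w_i a_t^i}{(1-\alpha)+\alpha w_i},\qquad \zeta_d(0\mid x_{<t};a_{1:t})=1-\zeta_d(1\mid x_{<t};a_{1:t}).$$ *)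

theory Defs
  imports Complex_Main
begin

text \<open>Binary input vectors a_t in {0,1}^d are modelled as functions nat => bool,
  of which only components 1..d are relevant. A sequence a_{1:n} is a function
  nat => (nat => bool), indexed by times t = 1..n. Labels x_t are booleans (1 = True).\<close>

definition h :: "nat set \<Rightarrow> (nat \<Rightarrow> bool) \<Rightarrow> bool" where
  "h S v = (\<forall>i\<in>S. v i)"

definition bit :: "bool \<Rightarrow> real" where
  "bit b = (if b then 1 else 0)"

definition zeta_alpha :: "nat \<Rightarrow> real" where
  "zeta_alpha d = 2 powr (- real d / 2 ^ d)"

definition in_neg :: "nat \<Rightarrow> (nat \<Rightarrow> bool) \<Rightarrow> (nat \<Rightarrow> nat \<Rightarrow> bool) \<Rightarrow> nat \<Rightarrow> bool" where
  "in_neg d x a t = (\<exists>\<tau>\<in>{1..<t}. \<not> x \<tau> \<and> (\<forall>i\<in>{1..d}. a \<tau> i = a t i))"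

definition wgt :: "(nat \<Rightarrow> bool) \<Rightarrow> (nat \<Rightarrow> nat \<Rightarrow> bool) \<Rightarrow> nat \<Rightarrow> nat \<Rightarrow> real" where
  "wgt x a t i = (\<Prod>\<tau>\<in>{\<tau>\<in>{1..<t}. x \<tau>}. bit (a \<tau> i))"

definition zeta1 :: "nat \<Rightarrow> (nat \<Rightarrow> bool) \<Rightarrow> (nat \<Rightarrow> nat \<Rightarrow> bool) \<Rightarrow> nat \<Rightarrow> real" where
  "zeta1 d x a t =
     (if in_neg d x a t then 0
      else (\<Prod>i\<in>{1..d}. ((1 - zeta_alpha d) + zeta_alpha d * wgt x a t i * bit (a t i))
                          / ((1 - zeta_alpha d) + zeta_alpha d * wgt x a t i)))"

definition zeta :: "nat \<Rightarrow> bool \<Rightarrow> (nat \<Rightarrow> bool) \<Rightarrow> (nat \<Rightarrow> nat \<Rightarrow> bool) \<Rightarrow> nat \<Rightarrow> real" where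
  "zeta d b x a t = (if b then zeta1 d x a t else 1 - zeta1 d x a t)"

end

theory Submission
  imports Defs
begin

lemma wgt_char: "wgt x a t i = bit (\<forall>\<tau>\<in>{1..<t}. x \<tau> \<longrightarrow> a \<tau> i)"
proof (cases "\<forall>\<tau>\<in>{1..<t}. x \<tau> \<longrightarrow> a \<tau> i")
  case True
  then show ?thesis unfolding wgt_def by (auto simp: bit_def intro!: prod.neutral)
next
  case False
  then obtain \<tau> where "\<tau> \<in> {1..<t}" "x \<tau>" "\<not> a \<tau> i" by auto
  then show ?thesis unfolding wgt_def using False
    by (auto simp: bit_def intro!: prod_zero)
qed

lemma factor: "c + \<alpha> = 1 \<Longrightarrow> c > 0 \<Longrightarrow>
   (c + \<alpha> * bit w * bit b)/(c + \<alpha> * bit w) = (if w \<and> \<not> b then c else (1::real))"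
  by (auto simp: bit_def)

lemma pow_ineq: "d \<ge> 2 \<Longrightarrow> 2^(d+3) \<le> d * (2::nat)^(2*d)"
proof (induction d rule: dec_induct)
  case base then show ?case by simp
next
  case (step m)
  have "2^(Suc m + 3) = 2 * (2::nat)^(m+3)" by (simp del: power_Suc add: power_Suc[symmetric])
  also have "\<dots> \<le> 2 * (m * 2^(2*m))" using step by simp
  also have "\<dots> \<le> Suc m * 2^(2 * Suc m)" by (simp add: power_add)
  finally show ?case .
qed

lemma alpha_props:
  assumes "d \<ge> 2"
  shows "zeta_alpha d > 0" "zeta_alpha d < 1" "zeta_alpha d ^ (2^d) = 1 / 2^d"
    "1 - zeta_alpha d \<ge> 1 / 2^(2*d - 1)"
proof -
  define y where "y = real d / 2^d"
  have y0: "y > 0" using assms by (simp add: y_def)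
  have "real d * 2 \<le> 2^d" using assms
  proof (induction d rule: dec_induct)
    case base then show ?case by simp
  next
    case (step m) then show ?case by simp
  qed
  hence y1: "y \<le> 1/2" by (simp add: y_def field_simps)
  have za: "zeta_alpha d = 2 powr (-y)" by (simp add: zeta_alpha_def y_def)
  show "zeta_alpha d > 0" using za by simp
  show "zeta_alpha d < 1" using za y0 powr_less_mono[of "-y" 0 2] by simp
  show "zeta_alpha d ^ (2^d) = 1 / 2^d"
    unfolding za by (simp add: powr_power y_def powr_minus powr_realpow divide_simps)
  have ln2: "ln (2::real) \<ge> 1/2"
  proof -
    have "ln (1/2::real) \<le> 1/2 - 1" by (rule ln_le_minus_one) auto
    thus ?thesis by (simp add: ln_div)
  qed
  have "2 powr y = exp (y * ln 2)" by (simp add: powr_def)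
  also have "\<dots> \<ge> 1 + y * ln 2" by (rule exp_ge_add_one_self)
  finally have e1: "2 powr y \<ge> 1 + y * ln 2" .
  have "2 powr y \<ge> 1 + y/2"
  proof -
    have "y * (1/2) \<le> y * ln 2" using ln2 y0 by (intro mult_left_mono) auto
    thus ?thesis using e1 by simp
  qed
  moreover have "zeta_alpha d = 1 / (2 powr y)" using za by (simp add: powr_minus divide_inverse)
  ultimately have "zeta_alpha d \<le> 1 / (1 + y/2)" using y0 frac_le[of 1 1 "1+y/2" "2 powr y"]
    by simp
  moreover have "1 - 1/(1+y/2) = (y/2)/(1+y/2)" using y0 by (simp add: field_simps)
  moreover have "(y/2)/(1+y/2) \<ge> (y/2)/2" using y0 y1 by (intro divide_left_mono) auto
  ultimately have c: "1 - zeta_alpha d \<ge> y/4" by linarith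
  have "y/4 \<ge> 1 / 2^(2*d - 1)"
  proof -
    have "real (2^(d+3)) \<le> real (d * 2^(2*d))" using pow_ineq[OF assms] by linarith
    hence h: "2^(d+3) \<le> real d * 2^(2*d)" by simp
    have "2*d = Suc (2*d-1)" using assms by simp
    hence e: "(2::real)^(2*d) = 2 * 2^(2*d-1)" by (metis power_Suc)
    have "y/4 = real d / 2^(d+2)" by (simp add: y_def)
    moreover have "1 / 2^(2*d-1) \<le> real d / 2^(d+2)"
      using h e by (simp add: divide_simps power_add mult.commute)
    ultimately show ?thesis by simp
  qed
  with c show "1 - zeta_alpha d \<ge> 1 / 2^(2*d - 1)" by simp
qed

theorem theorem4:
  fixes d n :: nat and S :: "nat set" and a :: "nat \<Rightarrow> nat \<Rightarrow> bool" and x :: "nat \<Rightarrow> bool"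
  assumes "d \<ge> 2" and "n \<ge> 1" and "S \<subseteq> {1..d}"
    and "\<And>t. t \<in> {1..n} \<Longrightarrow> x t = h S (a t)"
  shows "(\<Prod>t\<in>{1..n}. zeta d (x t) x a t) > 0
         \<and> - log 2 (\<Prod>t\<in>{1..n}. zeta d (x t) x a t) \<le> 2 * real d ^ 2"
proof -
  note A = alpha_props[OF assms(1)]
  define \<alpha> where "\<alpha> = zeta_alpha d"
  define c where "c = 1 - \<alpha>"
  have a0: "\<alpha> > 0" and a1: "\<alpha> < 1" using A by (auto simp: \<alpha>_def)
  have c0: "c > 0" and c1: "c \<le> 1" using a0 a1 by (auto simp: c_def)
  define W where "W t = {i\<in>{1..d}. \<forall>\<tau>\<in>{1..<t}. x \<tau> \<longrightarrow> a \<tau> i}" for t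
  define V where "V t = {i\<in>{1..d}. a t i}" for t
  define N where "N m = V ` {\<tau>\<in>{1..<m}. \<not> x \<tau>}" for m
  define K where "K t = {i\<in>{1..d}. i \<in> W t \<and> \<not> a t i}" for t
  have z1: "\<not> in_neg d x a t \<Longrightarrow> zeta1 d x a t = c ^ card (K t)" for t
  proof -
    assume ni: "\<not> in_neg d x a t"
    have "zeta1 d x a t = (\<Prod>i\<in>{1..d}. (if i \<in> K t then c else 1))"
      unfolding zeta1_def using ni
      apply (simp add: wgt_char)
      apply (intro prod.cong refl)
      apply (subst factor[of "1 - zeta_alpha d" "zeta_alpha d"])
      using c0 by (auto simp: c_def \<alpha>_def K_def W_def)
    also have "\<dots> = c ^ card (K t)"
      by (simp add: prod.If_cases K_def Int_def)
    finally show ?thesis .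
  qed
  have inneg: "in_neg d x a t \<longleftrightarrow> V t \<in> N t" for t
  proof
    assume "in_neg d x a t"
    then obtain \<tau> where "\<tau> \<in> {1..<t}" "\<not> x \<tau>" "\<forall>i\<in>{1..d}. a \<tau> i = a t i"
      unfolding in_neg_def by auto
    moreover hence "V \<tau> = V t" unfolding V_def by auto
    ultimately show "V t \<in> N t" unfolding N_def by (metis (mono_tags, lifting) image_eqI mem_Collect_eq)
  next
    assume "V t \<in> N t"
    then obtain \<tau> where "\<tau> \<in> {1..<t}" "\<not> x \<tau>" and e: "V t = V \<tau>" unfolding N_def by auto
    moreover have "\<forall>i\<in>{1..d}. a \<tau> i = a t i"
    proof
      fix i assume i: "i \<in> {1..d}"
      have "i \<in> V t \<longleftrightarrow> i \<in> V \<tau>" using e by simp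
      thus "a \<tau> i = a t i" using i unfolding V_def by auto
    qed
    ultimately show "in_neg d x a t" unfolding in_neg_def by auto
  qed
  have Wsuc: "t \<ge> 1 \<Longrightarrow> W (Suc t) = (if x t then {i\<in>W t. a t i} else W t)" for t
    unfolding W_def by (auto simp: less_Suc_eq)
  have Nsuc: "t \<ge> 1 \<Longrightarrow> N (Suc t) = (if x t then N t else insert (V t) (N t))" for t
    unfolding N_def by (auto simp: less_Suc_eq)
  have Nfin: "finite (N m)" for m unfolding N_def by simp
  have Ncard: "card (N m) \<le> 2^d" for m
  proof -
    have "N m \<subseteq> Pow {1..d}" unfolding N_def V_def by auto
    hence "card (N m) \<le> card (Pow {1..d})" by (intro card_mono) auto
    thus ?thesis by (simp add: card_Pow)
  qed
  have Wfin: "finite (W t)" for t unfolding W_def by simp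
  have W1: "W 1 = {1..d}" unfolding W_def by auto
  have N1: "N 1 = {}" unfolding N_def by auto
  have inv: "m \<le> n \<Longrightarrow> c^d * \<alpha>^card (N (Suc m)) \<le> (\<Prod>t\<in>{1..m}. zeta d (x t) x a t) * c^card (W (Suc m))" for m
  proof (induction m)
    case 0
    then show ?case using W1 N1 by simp
  next
    case (Suc m)
    define t where "t = Suc m"
    have t1: "t \<ge> 1" and tn: "t \<in> {1..n}" using Suc.prems by (auto simp: t_def)
    define P where "P = (\<Prod>t\<in>{1..m}. zeta d (x t) x a t)"
    have IH: "c^d * \<alpha>^card (N t) \<le> P * c^card (W t)" using Suc by (simp add: t_def P_def)
    have Pt: "(\<Prod>t\<in>{1..Suc m}. zeta d (x t) x a t) = P * zeta d (x t) x a t"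
      by (simp add: P_def t_def prod.nat_ivl_Suc')
    have xt: "x t = h S (a t)" using assms(4) tn by simp
    have "0 \<le> c^d * \<alpha>^card (N t)" using c0 a0 by simp
    hence Pc0: "P * c^card (W t) \<ge> 0" using IH by linarith
    have G: "c^d * \<alpha>^card (N (Suc t)) \<le> P * zeta d (x t) x a t * c^card (W (Suc t))"
    proof (cases "x t")
      case True
      have ni: "\<not> in_neg d x a t"
      proof
        assume "in_neg d x a t"
        then obtain \<tau> where "\<tau> \<in> {1..<t}" "\<not> x \<tau>" "\<forall>i\<in>{1..d}. a \<tau> i = a t i"
          unfolding in_neg_def by auto
        moreover have "x \<tau> = h S (a \<tau>)" using assms(4) \<open>\<tau> \<in> {1..<t}\<close> tn by auto
        ultimately show False using True xt assms(3) unfolding h_def by auto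
      qed
      have z: "zeta d (x t) x a t = c ^ card (K t)" using True z1[OF ni] by (simp add: zeta_def)
      have Ws: "W (Suc t) = {i\<in>W t. a t i}" using Wsuc[OF t1] True by simp
      have "W t = W (Suc t) \<union> K t" "W (Suc t) \<inter> K t = {}"
        using Ws unfolding K_def W_def by auto
      hence cw: "card (W t) = card (W (Suc t)) + card (K t)"
        using Wfin by (metis card_Un_disjoint finite_Un)
      have Ns: "N (Suc t) = N t" using Nsuc[OF t1] True by simp
      have "P * zeta d (x t) x a t * c^card (W (Suc t)) = P * c^card (W t)"
        by (simp add: z cw power_add mult_ac)
      thus ?thesis using IH Ns by (simp only:)
    next
      case False
      have Ws: "W (Suc t) = W t" using Wsuc[OF t1] False by simp
      show ?thesis
      proof (cases "in_neg d x a t")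
        case True
        have Ns: "N (Suc t) = N t" using Nsuc[OF t1] False True inneg by auto
        have z: "zeta d (x t) x a t = 1" using False True by (simp add: zeta_def zeta1_def)
        show ?thesis using IH unfolding z Ns Ws by simp
      next
        case ni: False
        have Ns: "card (N (Suc t)) = Suc (card (N t))" using Nsuc[OF t1] False ni inneg Nfin by auto
        obtain i where i: "i \<in> S" "\<not> a t i" using False xt unfolding h_def by auto
        have "i \<in> K t" unfolding K_def W_def using i assms(3) assms(4) tn unfolding h_def by auto
        moreover have "finite (K t)" unfolding K_def by simp
        ultimately have "card (K t) \<ge> 1" by (metis One_nat_def Suc_leI card_gt_0_iff empty_iff)
        hence "c ^ card (K t) \<le> c ^ 1" using c0 c1 by (intro power_decreasing) auto
        hence z: "zeta d (x t) x a t \<ge> \<alpha>" using False z1[OF ni] by (simp add: zeta_def c_def)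
        have "c^d * \<alpha>^card (N (Suc t)) = \<alpha> * (c^d * \<alpha>^card (N t))" using Ns by simp
        also have "\<dots> \<le> \<alpha> * (P * c^card (W t))" using IH a0 by simp
        also have "\<dots> \<le> zeta d (x t) x a t * (P * c^card (W t))"
          using z Pc0 by (intro mult_right_mono) auto
        finally show ?thesis unfolding Ws by (simp add: mult_ac)
      qed
    qed
    show ?case using G unfolding Pt by (simp add: t_def)
  qed
  define P where "P = (\<Prod>t\<in>{1..n}. zeta d (x t) x a t)"
  have I: "c^d * \<alpha>^card (N (Suc n)) \<le> P * c^card (W (Suc n))" using inv[of n] by (simp add: P_def)
  have "\<alpha>^(2^d) \<le> \<alpha>^card (N (Suc n))" using a0 a1 Ncard by (intro power_decreasing) auto
  hence "c^d * \<alpha>^(2^d) \<le> c^d * \<alpha>^card (N (Suc n))" using c0 by simp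
  also have "\<dots> \<le> P * c^card (W (Suc n))" by (rule I)
  finally have I2: "c^d * \<alpha>^(2^d) \<le> P * c^card (W (Suc n))" .
  have pos: "c^d * \<alpha>^(2^d) > 0" using c0 a0 by simp
  have cw1: "c^card (W (Suc n)) \<le> 1" "c^card (W (Suc n)) > 0" using c0 c1 by (auto intro: power_le_one)
  have Ppos: "P > 0"
  proof (rule ccontr)
    assume "\<not> P > 0"
    hence "P * c^card (W (Suc n)) \<le> 0" using cw1 by (simp add: mult_nonpos_nonneg)
    thus False using I2 pos by linarith
  qed
  have "P * c^card (W (Suc n)) \<le> P" using Ppos cw1 by (simp add: mult_left_le)
  with I2 have I3: "c^d * \<alpha>^(2^d) \<le> P" by linarith
  have cb: "c \<ge> 1 / 2^(2*d-1)" using A by (simp add: c_def \<alpha>_def)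
  have "(1 / 2^(2*d-1))^d \<le> c^d" using cb by (intro power_mono) auto
  hence "(1 / 2^(2*d-1))^d * (1/2^d) \<le> c^d * \<alpha>^(2^d)"
    using A by (simp add: \<alpha>_def divide_right_mono)
  moreover have "(1 / 2^(2*d-1))^d * (1/2^d) = (1::real) / 2^(2*d^2)"
  proof -
    have "(2*d-1)*d + d = 2*d^2" using assms(1) by (simp add: power2_eq_square algebra_simps)
    hence "(2::real)^((2*d-1)*d) * 2^d = 2^(2*d^2)" by (metis power_add)
    thus ?thesis by (simp add: power_divide power_mult[symmetric] mult.commute)
  qed
  ultimately have P2: "1 / 2^(2*d^2) \<le> P" using I3 by linarith
  have "log 2 (1 / 2^(2*d^2)) \<le> log 2 P" using P2 Ppos by (subst log_le_cancel_iff) auto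
  moreover have "log 2 (1 / (2::real)^(2*d^2)) = - (2 * real d ^ 2)"
    by (simp add: log_divide log_nat_power)
  ultimately show ?thesis using Ppos by (simp add: P_def)
qed

end
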